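(* Let $M$ be a finitely generated monoid. Then the number of ends of $M$ with respect to a finite generating set does not depend on the choice of finite generating set.
   Context: For a monoid $M$ generated by a finite set $X$, the right Cayley graph is the directed graph with vertex set $M$ and an edge labelled $a$ from $m$ to $ma$ for each $m\in M$, $a\in X$. The number of ends of $M$ with respect to $X$ is the supremum, over all finite sets $F$ of vertices, of the number of infinite connected components of the graph obtained by deleting $F$ from the underlying undirected graph of the right Cayley graph. *)

theory Defs
  imports Main "HOL-Library.Extended_Nat"
begin

text \<open>A monoid is modelled by a type of class monoid_mult (carrier = UNIV).\<close>

definition generates :: "'a::monoid_mult set \<Rightarrow> bool" where
  "generates X \<longleftrightarrow> (\<forall>m. \<exists>xs. set xs \<subseteq> X \<and> m = prod_list xs)"

text \<open>Underlying undirected graph of the right Cayley graph: an edge m -- m*a for a in X.\<close>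
definition cayley_adj :: "'a::monoid_mult set \<Rightarrow> 'a \<Rightarrow> 'a \<Rightarrow> bool" where
  "cayley_adj X u v \<longleftrightarrow> (\<exists>a\<in>X. v = u * a \<or> u = v * a)"

definition del_edges :: "'a::monoid_mult set \<Rightarrow> 'a set \<Rightarrow> ('a \<times> 'a) set" where
  "del_edges X F = {(u, v). u \<notin> F \<and> v \<notin> F \<and> cayley_adj X u v}"

definition component :: "'a::monoid_mult set \<Rightarrow> 'a set \<Rightarrow> 'a \<Rightarrow> 'a set" where
  "component X F v = {w. (v, w) \<in> (del_edges X F)\<^sup>*}"

definition infinite_components :: "'a::monoid_mult set \<Rightarrow> 'a set \<Rightarrow> 'a set set" where
  "infinite_components X F = {C. \<exists>v. v \<notin> F \<and> C = component X F v \<and> infinite C}"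

definition num_infinite_components :: "'a::monoid_mult set \<Rightarrow> 'a set \<Rightarrow> enat" where
  "num_infinite_components X F =
     (if finite (infinite_components X F) then enat (card (infinite_components X F)) else \<infinity>)"

definition num_ends :: "'a::monoid_mult set \<Rightarrow> enat" where
  "num_ends X = (SUP F \<in> {F. finite F}. num_infinite_components X F)"

end

theory Submission
  imports Defs
begin

lemma del_edges_sym: "(u,v) \<in> del_edges X F \<Longrightarrow> (v,u) \<in> del_edges X F"
  by (auto simp: del_edges_def cayley_adj_def)

lemma rtrancl_del_sym: "(u,v) \<in> (del_edges X F)\<^sup>* \<Longrightarrow> (v,u) \<in> (del_edges X F)\<^sup>*"
proof (induction rule: rtrancl_induct)
  case base then show ?case by simp
next
  case (step y z) then show ?case by (meson converse_rtrancl_into_rtrancl del_edges_sym)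
qed

lemma component_eq: "z \<in> component X F v \<Longrightarrow> component X F z = component X F v"
  unfolding component_def using rtrancl_del_sym by (blast intro: rtrancl_trans)

lemma path_lemma:
  "set w \<subseteq> X \<Longrightarrow> (\<forall>i \<le> length w. u * prod_list (take i w) \<notin> F)
   \<Longrightarrow> (u, u * prod_list w) \<in> (del_edges X F)\<^sup>*"
proof (induction w arbitrary: u)
  case Nil then show ?case by simp
next
  case (Cons a w)
  have u: "u \<notin> F" using Cons.prems(2)[rule_format, of 0] by simp
  have ua: "u*a \<notin> F" using Cons.prems(2)[rule_format, of 1] by simp
  have e: "(u, u*a) \<in> del_edges X F" using u ua Cons.prems(1)
    by (auto simp: del_edges_def cayley_adj_def)
  have "(u*a, u*a*prod_list w) \<in> (del_edges X F)\<^sup>*"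
  proof (rule Cons.IH)
    show "set w \<subseteq> X" using Cons.prems(1) by simp
    show "\<forall>i\<le>length w. u * a * prod_list (take i w) \<notin> F"
    proof (intro allI impI)
      fix i assume "i \<le> length w"
      then have "Suc i \<le> length (a#w)" by simp
      then have "u * prod_list (take (Suc i) (a#w)) \<notin> F" using Cons.prems(2) by blast
      then show "u * a * prod_list (take i w) \<notin> F" by (simp add: mult.assoc)
    qed
  qed
  then have "(u*a, u*(a*prod_list w)) \<in> (del_edges X F)\<^sup>*" by (simp add: mult.assoc)
  then show ?case using e by (simp add: converse_rtrancl_into_rtrancl)
qed

lemma entry_lemma:
  assumes "set w \<subseteq> X" "prod_list w \<notin> F"
  shows "\<exists>e \<in> insert 1 ((\<lambda>p. fst p * snd p) ` (F \<times> X)) - F. (e, prod_list w) \<in> (del_edges X F)\<^sup>*"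
  using assms
proof (induction w rule: rev_induct)
  case Nil then show ?case by auto
next
  case (snoc x w)
  show ?case
  proof (cases "prod_list w \<in> F")
    case True
    then have "prod_list (w@[x]) \<in> (\<lambda>p. fst p * snd p) ` (F \<times> X)"
      using snoc.prems by (auto intro!: image_eqI[where x="(prod_list w, x)"])
    then show ?thesis using snoc.prems by blast
  next
    case False
    then obtain e where e: "e \<in> insert 1 ((\<lambda>p. fst p * snd p) ` (F \<times> X)) - F"
      "(e, prod_list w) \<in> (del_edges X F)\<^sup>*" using snoc by auto
    have "(prod_list w, prod_list (w@[x])) \<in> del_edges X F"
      using False snoc.prems by (auto simp: del_edges_def cayley_adj_def)
    then show ?thesis using e by (meson rtrancl_into_rtrancl)
  qed
qed

lemma finite_components:
  assumes "finite X" "generates X" "finite F"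
  shows "finite (component X F ` (- F))"
proof -
  let ?E = "insert 1 ((\<lambda>p. fst p * snd p) ` (F \<times> X)) - F"
  have "component X F ` (- F) \<subseteq> component X F ` ?E"
  proof
    fix C assume "C \<in> component X F ` (-F)"
    then obtain v where v: "v \<notin> F" "C = component X F v" by auto
    obtain w where w: "set w \<subseteq> X" "v = prod_list w" using assms(2) unfolding generates_def by blast
    then obtain e where e: "e \<in> ?E" "(e, v) \<in> (del_edges X F)\<^sup>*" using entry_lemma v by metis
    then have "v \<in> component X F e" by (simp add: component_def)
    then have "C = component X F e" using component_eq v by metis
    then show "C \<in> component X F ` ?E" using e(1) by blast
  qed
  moreover have "finite ?E" using assms by auto
  ultimately show ?thesis by (meson finite_imageI finite_subset)
qed

lemma ends_le:
  fixes X Y :: "'a::monoid_mult set"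
  assumes "finite X" "generates X" "finite Y" "generates Y"
  shows "num_ends X \<le> num_ends Y"
proof -
  define W where "W y = (SOME xs. set xs \<subseteq> X \<and> y = prod_list xs)" for y
  have W: "set (W y) \<subseteq> X \<and> y = prod_list (W y)" for y
  proof -
    have "\<exists>xs. set xs \<subseteq> X \<and> y = prod_list xs" using assms(2) unfolding generates_def by blast
    then show ?thesis unfolding W_def by (rule someI_ex)
  qed
  define S where "S = (\<Union>y\<in>Y. (\<lambda>i. prod_list (drop i (W y))) ` {..length (W y)})"
  have finS: "finite S" using assms(3) by (simp add: S_def)
  show ?thesis unfolding num_ends_def
  proof (rule SUP_least)
    fix F assume "F \<in> {F::'a set. finite F}"
    then have finF: "finite F" by simp
    define F1 where "F1 = F \<union> (\<lambda>p. fst p * snd p) ` (F \<times> S)"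
    have finF1: "finite F1" using finF finS by (simp add: F1_def)
    have key: "(a, b) \<in> (del_edges X F)\<^sup>*" if "(a,b) \<in> del_edges Y F1" for a b
    proof -
      from that have ab: "a \<notin> F1" "b \<notin> F1" and "cayley_adj Y a b" by (auto simp: del_edges_def)
      then obtain y where y: "y \<in> Y" "b = a*y \<or> a = b*y" by (auto simp: cayley_adj_def)
      have gen: "(c, c*y) \<in> (del_edges X F)\<^sup>*" if c: "c*y \<notin> F1" for c
      proof -
        have "(c, c * prod_list (W y)) \<in> (del_edges X F)\<^sup>*"
        proof (rule path_lemma)
          show "set (W y) \<subseteq> X" using W by blast
          show "\<forall>i\<le>length (W y). c * prod_list (take i (W y)) \<notin> F"
          proof (intro allI impI notI)
            fix i assume i: "i \<le> length (W y)" and cF: "c * prod_list (take i (W y)) \<in> F"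
            have "prod_list (drop i (W y)) \<in> S" using i y(1) unfolding S_def by blast
            then have "(c * prod_list (take i (W y)), prod_list (drop i (W y))) \<in> F \<times> S"
              using cF by simp
            then have "c * prod_list (take i (W y)) * prod_list (drop i (W y)) \<in> F1"
              unfolding F1_def by force
            moreover have "c * prod_list (take i (W y)) * prod_list (drop i (W y)) = c * y"
              by (metis W mult.assoc prod_list.append append_take_drop_id)
            ultimately show False using c by simp
          qed
        qed
        then show ?thesis using W by metis
      qed
      from y(2) show ?thesis
      proof
        assume "b = a*y" then show ?thesis using gen[of a] ab by simp
      next
        assume "a = b*y" then have "(b,a) \<in> (del_edges X F)\<^sup>*" using gen[of b] ab by simp
        then show ?thesis by (rule rtrancl_del_sym)
      qed
    qed
    have sub: "component Y F1 v \<subseteq> component X F v" for v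
    proof
      fix z assume "z \<in> component Y F1 v"
      then have "(v,z) \<in> (del_edges Y F1)\<^sup>*" by (simp add: component_def)
      then have "(v,z) \<in> (del_edges X F)\<^sup>*"
        by (induction rule: rtrancl_induct) (auto intro: rtrancl_trans key)
      then show "z \<in> component X F v" by (simp add: component_def)
    qed
    have finXc: "finite (component X F ` (-F))" using finite_components assms(1,2) finF by blast
    have finYc: "finite (component Y F1 ` (-F1))" using finite_components assms(3,4) finF1 by blast
    have finIX: "finite (infinite_components X F)"
      by (rule finite_subset[OF _ finXc]) (auto simp: infinite_components_def)
    have finIY: "finite (infinite_components Y F1)"
      by (rule finite_subset[OF _ finYc]) (auto simp: infinite_components_def)
    have ex: "\<exists>D. D \<in> infinite_components Y F1 \<and> D \<subseteq> C" if C: "C \<in> infinite_components X F" for C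
    proof -
      obtain v where v: "v \<notin> F" "C = component X F v" "infinite C"
        using C by (auto simp: infinite_components_def)
      have cov: "C - F1 \<subseteq> \<Union> (component Y F1 ` (C - F1))" by (auto simp: component_def)
      have "infinite (C - F1)" using v(3) finF1 by simp
      then have inf: "infinite (\<Union> (component Y F1 ` (C - F1)))" using cov finite_subset by blast
      have "finite (component Y F1 ` (C - F1))" by (rule finite_subset[OF _ finYc]) auto
      then obtain w where w: "w \<in> C - F1" "infinite (component Y F1 w)"
        using inf finite_Union by blast
      have "w \<in> component X F v" using w v by simp
      then have "component X F w = C" using component_eq v by metis
      then have "component Y F1 w \<subseteq> C" using sub by blast
      moreover have "w \<notin> F1" using w by simp
      ultimately show ?thesis using w unfolding infinite_components_def by blast
    qed
    define g where "g C = (SOME D. D \<in> infinite_components Y F1 \<and> D \<subseteq> C)" for C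
    have g: "g C \<in> infinite_components Y F1 \<and> g C \<subseteq> C" if "C \<in> infinite_components X F" for C
      unfolding g_def using ex[OF that] by (rule someI_ex)
    have inj: "inj_on g (infinite_components X F)"
    proof (rule inj_onI)
      fix C C' assume C: "C \<in> infinite_components X F" and C': "C' \<in> infinite_components X F"
        and eq: "g C = g C'"
      from g[OF C] have "infinite (g C)" by (auto simp: infinite_components_def)
      then obtain z where "z \<in> g C" by (metis finite.emptyI ex_in_conv)
      then have z: "z \<in> C" "z \<in> C'" using g[OF C] g[OF C'] eq by auto
      from C obtain v where v: "C = component X F v" by (auto simp: infinite_components_def)
      from C' obtain v' where v': "C' = component X F v'" by (auto simp: infinite_components_def)
      show "C = C'" using component_eq z v v' by metis
    qed
    have "card (infinite_components X F) \<le> card (infinite_components Y F1)"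
      using card_inj_on_le[OF inj] g finIY by blast
    then have "num_infinite_components X F \<le> num_infinite_components Y F1"
      using finIX finIY by (simp add: num_infinite_components_def)
    also have "\<dots> \<le> (SUP G\<in>{G. finite G}. num_infinite_components Y G)"
      using finF1 by (intro SUP_upper) auto
    finally show "num_infinite_components X F \<le> (SUP G\<in>{G. finite G}. num_infinite_components Y G)" .
  qed
qed

theorem corollary7p3:
  fixes X Y :: "'a::monoid_mult set"
  assumes "finite X" and "generates X"
      and "finite Y" and "generates Y"
  shows "num_ends X = num_ends Y"
  using ends_le[OF assms] ends_le[of Y X] assms by (simp add: order_antisym)

end
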